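(* Let $N\ge3$. Consider item types: type $(i,7)$ for $1\le i\le N$ with size $\frac1{7^i}$ and weight $\frac1{7^{i-1}}$, and types $j\in\{1,2,3\}$ with size $\frac1j$ and weight $2$. In the arrival order $(N,7),(N-1,7),\dots,(1,7),3,2,1$ (with $1$-items) and $(N,7),\dots,(1,7),3,2$ (without $1$-items), define: $W_i$ (resp. $V_i$) is the maximum total weight of a feasible bin using only items of types that arrive not earlier than type $(i,7)$ in the first (resp. second) order; $A_j$ (resp. $B_j$) is the maximum total weight of a feasible bin using only items of types arriving not earlier than type $j$ in the first (resp. second) order. Then $A_1=2$, $A_2=B_2=4$, $A_3=B_3=6$, and $W_k=V_k=9-\frac1{7^{k-1}}$ for every $1\le k\le N$.
   Context: A feasible bin is a finite multiset of items (each item of one of the listed types, arbitrary multiplicities) such that when the items are arranged according to the arrival order of their types, the total size of all items except the last one is strictly below $1$ (this is the Ordered Open End Bin Packing rule: an item may be added to a bin only while the bin's current total size is strictly below $1$). The weight of a bin is the sum of the weights of its items. Thus "types arriving not earlier than $(i,7)$" in the first order are $(i,7),(i-1,7),\dots,(1,7),3,2,1$, and in the second order $(i,7),\dots,(1,7),3,2$. *)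

theory Defs
  imports Main "HOL-Library.Multiset" Complex_Main
begin

text \<open>Item types: \<open>Seven i\<close> is type (i,7); \<open>Big j\<close> is type j (j in {1,2,3}).\<close>
datatype itype = Seven nat | Big nat

fun isize :: "itype \<Rightarrow> real" where
  "isize (Seven i) = 1 / 7 ^ i"
| "isize (Big j) = 1 / real j"

fun iweight :: "itype \<Rightarrow> real" where
  "iweight (Seven i) = 1 / 7 ^ (i - 1)"
| "iweight (Big j) = 2"

definition order1 :: "nat \<Rightarrow> itype list" where
  "order1 N = map Seven (rev [1..<N+1]) @ [Big 3, Big 2, Big 1]"

definition order2 :: "nat \<Rightarrow> itype list" where
  "order2 N = map Seven (rev [1..<N+1]) @ [Big 3, Big 2]"

definition arrange :: "itype list \<Rightarrow> itype multiset \<Rightarrow> itype list" where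
  "arrange ord B = concat (map (\<lambda>t. replicate (count B t) t) ord)"

text \<open>Ordered Open End feasibility: all items except the last have total size < 1.\<close>
definition feasible :: "itype list \<Rightarrow> itype multiset \<Rightarrow> bool" where
  "feasible ord B \<longleftrightarrow> set_mset B \<subseteq> set ord
     \<and> sum_list (map isize (butlast (arrange ord B))) < 1"

definition bin_weight :: "itype multiset \<Rightarrow> real" where
  "bin_weight B = (\<Sum>x\<in>#B. iweight x)"

definition not_earlier :: "itype list \<Rightarrow> itype \<Rightarrow> itype set" where
  "not_earlier ord t = set (dropWhile (\<lambda>s. s \<noteq> t) ord)"

definition max_weight :: "itype list \<Rightarrow> itype \<Rightarrow> real" where
  "max_weight ord t = Max {bin_weight B | B. feasible ord B \<and> set_mset B \<subseteq> not_earlier ord t}"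

definition W :: "nat \<Rightarrow> nat \<Rightarrow> real" where "W N i = max_weight (order1 N) (Seven i)"
definition V :: "nat \<Rightarrow> nat \<Rightarrow> real" where "V N i = max_weight (order2 N) (Seven i)"
definition A :: "nat \<Rightarrow> nat \<Rightarrow> real" where "A N j = max_weight (order1 N) (Big j)"
definition B :: "nat \<Rightarrow> nat \<Rightarrow> real" where "B N j = max_weight (order2 N) (Big j)"

end

theory Submission
  imports Defs
begin

lemma arrange_Cons: "arrange (t # ord) M = replicate (count M t) t @ arrange ord M"
  by (simp add: arrange_def)

lemma set_arrange: "set (arrange ord M) \<subseteq> set ord"
  by (induction ord) (auto simp: arrange_Cons, simp add: arrange_def)

lemma mset_arrange_gen: "distinct ord \<Longrightarrow> mset (arrange ord M) = filter_mset (\<lambda>x. x \<in> set ord) M"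
proof (induction ord)
  case Nil
  then show ?case by (simp add: arrange_def)
next
  case (Cons t ord)
  have "filter_mset (\<lambda>x. x \<in> set (t # ord)) M = filter_mset (\<lambda>x. x = t) M + filter_mset (\<lambda>x. x \<in> set ord) M"
    using Cons.prems by (intro multiset_eqI) auto
  then show ?case using Cons by (simp add: arrange_Cons filter_eq_replicate_mset)
qed

lemma mset_arrange: "distinct ord \<Longrightarrow> set_mset M \<subseteq> set ord \<Longrightarrow> mset (arrange ord M) = M"
  by (simp add: mset_arrange_gen multiset_filter_subset filter_mset_eq_conv subset_iff)

lemma sorted_arrange: "sorted (map isize ord) \<Longrightarrow> sorted (map isize (arrange ord M))"
proof (induction ord)
  case Nil
  then show ?case by (simp add: arrange_def)
next
  case (Cons t ord)
  then show ?case using set_arrange[of ord M]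
    by (auto simp: arrange_Cons sorted_append)
qed

lemma sum_diff1: "L \<in># M \<Longrightarrow> sum_mset (image_mset (f::_\<Rightarrow>real) (M - {#L#})) = sum_mset (image_mset f M) - f L"
  by (metis add_diff_cancel_left' image_mset_add_mset insert_DiffM sum_mset.insert)

lemma arr_facts:
  assumes "distinct ord" "sorted (map isize ord)" "set_mset M \<subseteq> set ord" "M \<noteq> {#}"
  shows "last (arrange ord M) \<in># M \<and> (\<forall>x\<in>#M. isize x \<le> isize (last (arrange ord M))) \<and>
     sum_list (map isize (butlast (arrange ord M))) = sum_mset (image_mset isize (M - {#last (arrange ord M)#}))"
proof -
  define xs where "xs = arrange ord M"
  have m: "mset xs = M" using assms mset_arrange xs_def by blast
  have ne: "xs \<noteq> []" using m assms(4) by auto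
  have dec: "xs = butlast xs @ [last xs]" using ne by simp
  have srt: "sorted (map isize xs)" using sorted_arrange assms(2) xs_def by blast
  have L: "last xs \<in># M" using m ne by (metis last_in_set set_mset_mset)
  have mx: "\<forall>x\<in>set xs. isize x \<le> isize (last xs)"
  proof
    fix x assume "x \<in> set xs"
    then have "x \<in> set (butlast xs) \<or> x = last xs" using dec by (metis rotate1.simps(2) set_ConsD set_rotate1)
    moreover have "sorted (map isize (butlast xs) @ [isize (last xs)])" using srt dec by (metis list.map(1) list.map(2) map_append)
    ultimately show "isize x \<le> isize (last xs)" by (auto simp: sorted_append)
  qed
  have "mset (butlast xs) = M - {#last xs#}" using dec m
    by (metis add_diff_cancel_right' mset.simps(1) mset.simps(2) mset_append add_mset_add_single add.right_neutral)
  then have "sum_list (map isize (butlast xs)) = sum_mset (image_mset isize (M - {#last xs#}))"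
    by (metis mset_map sum_mset_sum_list)
  moreover have sx: "set_mset M = set xs" using m by (metis set_mset_mset)
  ultimately show ?thesis using L mx xs_def by auto
qed

lemma feas_elim:
  assumes "distinct ord" "sorted (map isize ord)" "feasible ord M" "M \<noteq> {#}"
  shows "\<exists>L. L \<in># M \<and> (\<forall>x\<in>#M. isize x \<le> isize L) \<and> sum_mset (image_mset isize (M - {#L#})) < 1"
  using arr_facts[OF assms(1,2) _ assms(4)] assms(3) unfolding feasible_def by metis

lemma feas_intro:
  assumes "distinct ord" "sorted (map isize ord)" "set_mset M \<subseteq> set ord" "L \<in># M"
    "\<forall>x\<in>#M. isize x \<le> isize L" "sum_mset (image_mset isize (M - {#L#})) < 1"
  shows "feasible ord M"
proof -
  have ne: "M \<noteq> {#}" using assms(4) by auto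
  note f = arr_facts[OF assms(1,2,3) ne]
  define L' where "L' = last (arrange ord M)"
  have "isize L = isize L'" using f assms(4,5) L'_def by (meson order_antisym)
  then have "sum_list (map isize (butlast (arrange ord M))) = sum_mset (image_mset isize (M - {#L#}))"
    using f sum_diff1[of L M isize] sum_diff1[of L' M isize] assms(4) L'_def by simp
  then show ?thesis using assms(3,6) unfolding feasible_def by simp
qed

lemma arrange_empty: "arrange ord {#} = []"
  by (induction ord) (simp_all add: arrange_def)

lemma feas_empty: "feasible ord {#}"
  by (simp add: feasible_def arrange_empty)

lemma finite_feas:
  assumes "distinct ord" "sorted (map isize ord)" "d > 0" "\<forall>x\<in>set ord. isize x \<ge> d"
  shows "finite {M. feasible ord M}"
proof -
  define n where "n = nat \<lceil>1/d\<rceil> + 1"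
  have "{M. feasible ord M} \<subseteq> (\<Union>m\<le>n. multisets_of_size (set ord) m)"
  proof
    fix M assume "M \<in> {M. feasible ord M}"
    then have fM: "feasible ord M" by simp
    then have sub: "set_mset M \<subseteq> set ord" by (simp add: feasible_def)
    have "size M \<le> n"
    proof (cases "M = {#}")
      case True then show ?thesis by simp
    next
      case False
      then obtain L where L: "L \<in># M" "sum_mset (image_mset isize (M - {#L#})) < 1"
        using feas_elim[OF assms(1,2) fM] by blast
      have "sum_mset (image_mset (\<lambda>_. d) (M - {#L#})) \<le> sum_mset (image_mset isize (M - {#L#}))"
        by (rule sum_mset_mono) (use sub assms(4) in \<open>auto dest: in_diffD\<close>)
      then have "real (size (M - {#L#})) * d < 1" using L by simp
      then have "real (size (M - {#L#})) < 1/d" using assms(3) by (simp add: field_simps)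
      then have "real (size (M - {#L#})) < real (nat \<lceil>1/d\<rceil>)" by linarith
      then show ?thesis using L(1) size_Diff_singleton[OF L(1)] n_def by linarith
    qed
    then show "M \<in> (\<Union>m\<le>n. multisets_of_size (set ord) m)" using sub by (auto simp: multisets_of_size_def)
  qed
  moreover have "finite (\<Union>m\<le>n. multisets_of_size (set ord) m)" by auto
  ultimately show ?thesis by (rule finite_subset)
qed

lemma max_weight_eq:
  assumes "finite {M. feasible ord M}" "feasible ord M0" "set_mset M0 \<subseteq> not_earlier ord t"
    "bin_weight M0 = w"
    "\<And>M. feasible ord M \<Longrightarrow> set_mset M \<subseteq> not_earlier ord t \<Longrightarrow> bin_weight M \<le> w"
  shows "max_weight ord t = w"
  unfolding max_weight_def
proof (rule Max_eqI)
  have "{bin_weight M |M. feasible ord M \<and> set_mset M \<subseteq> not_earlier ord t} \<subseteq> bin_weight ` {M. feasible ord M}"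
    by auto
  then show "finite {bin_weight M |M. feasible ord M \<and> set_mset M \<subseteq> not_earlier ord t}"
    using assms(1) finite_surj by blast
qed (use assms in auto)


fun issev :: "itype \<Rightarrow> bool" where
  "issev (Seven i) = True" | "issev (Big j) = False"

fun sidx :: "itype \<Rightarrow> nat" where
  "sidx (Seven i) = i" | "sidx (Big j) = 0"

lemma split_sum: "sum_mset (image_mset (f::_\<Rightarrow>real) R) =
   sum_mset (image_mset f (filter_mset P R)) + sum_mset (image_mset f (filter_mset (\<lambda>x. \<not> P x) R))"
  by (metis multiset_partition image_mset_union sum_mset.union)

lemma boundBig:
  assumes "c \<ge> 1" "\<forall>x\<in>#M. x \<in> Big ` {1..c}" "L \<in># M" "sum_mset (image_mset isize (M - {#L#})) < 1"
  shows "bin_weight M \<le> 2 * real c"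
proof -
  have "image_mset iweight M = image_mset (\<lambda>_. 2) M"
    by (rule image_mset_cong) (use assms(2) in auto)
  then have w: "bin_weight M = 2 * real (size M)" by (simp add: bin_weight_def)
  have "sum_mset (image_mset (\<lambda>_. 1 / real c) (M - {#L#})) \<le> sum_mset (image_mset isize (M - {#L#}))"
  proof (rule sum_mset_mono)
    fix x assume "x \<in># M - {#L#}"
    then have "x \<in># M" by (rule in_diffD)
    then obtain j where "x = Big j" "1 \<le> j" "j \<le> c" using assms(2) by auto
    then show "1 / real c \<le> isize x" by (simp add: frac_le)
  qed
  then have "real (size (M - {#L#})) * (1 / real c) < 1" using assms(4) by simp
  then have "real (size (M - {#L#})) < real c" using assms(1) by (simp add: field_simps)
  then have "size (M - {#L#}) < c" by simp
  moreover have "size M = Suc (size (M - {#L#}))" using assms(3) by (metis insert_DiffM size_add_mset)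
  ultimately have "size M \<le> c" by linarith
  then show ?thesis using w by simp
qed

lemma natbound:
  fixes m n P :: nat
  assumes "P = 7 \<or> P \<ge> 49" "3 * m + n * P < 3 * P"
  shows "7 * m + 2 * n * P + 7 \<le> 7 * P"
proof -
  have "n < 3"
  proof (rule ccontr)
    assume "\<not> n < 3"
    then have "3 * P \<le> n * P" by simp
    then show False using assms(2) by linarith
  qed
  then consider "n = 0" | "n = 1" | "n = 2" by linarith
  then show ?thesis
  proof cases
    case 1 then show ?thesis using assms(2) by simp
  next
    case 2
    then have h: "3 * m + 1 \<le> 2 * P" using assms(2) by simp
    show ?thesis using assms(1)
    proof
      assume "P = 7" then show ?thesis using h 2 by simp
    next
      assume "P \<ge> 49" then show ?thesis using h 2 by simp
    qed
  next
    case 3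
    then have h: "3 * m + 1 \<le> P" using assms(2) by simp
    show ?thesis using h 3 assms(1) by auto
  qed
qed

lemma boundW:
  assumes k: "k \<ge> 1" and ty: "\<forall>x\<in>#M. x \<in> Seven ` {1..k} \<union> {Big 1, Big 2, Big 3}"
    and L: "L \<in># M" and mx: "\<forall>x\<in>#M. isize x \<le> isize L"
    and lt: "sum_mset (image_mset isize (M - {#L#})) < 1"
  shows "bin_weight M \<le> 9 - 1 / 7 ^ (k - 1)"
proof -
  define R where "R = M - {#L#}"
  define Rs where "Rs = filter_mset issev R"
  define Rb where "Rb = filter_mset (\<lambda>x. \<not> issev x) R"
  define P :: nat where "P = 7 ^ k"
  have Pr: "real P = 7 ^ k" by (simp add: P_def)
  have P7: "P = 7 \<or> P \<ge> 49"
  proof (cases "k = 1")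
    case True then show ?thesis by (simp add: P_def)
  next
    case False
    then have "(7::nat) ^ 2 \<le> 7 ^ k" using k by (intro power_increasing) auto
    then show ?thesis by (simp add: P_def)
  qed
  have tyR: "\<forall>x\<in>#R. x \<in> Seven ` {1..k} \<union> {Big 1, Big 2, Big 3}"
    using ty R_def by (auto dest: in_diffD)
  have k7: "1 / 7 ^ (k - 1) = 7 / (7::real) ^ k"
    using k by (cases k) auto
  define m :: nat where "m = sum_mset (image_mset (\<lambda>x. 7 ^ (k - sidx x)) Rs)"
  define s where "s = sum_mset (image_mset isize Rs)"
  have sevRs: "\<forall>x\<in>#Rs. \<exists>i. x = Seven i \<and> 1 \<le> i \<and> i \<le> k"
    using tyR by (auto simp: Rs_def)
  have "real m = sum_mset (image_mset (\<lambda>x. real P * isize x) Rs)"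
    unfolding m_def of_nat_sum_mset multiset.map_comp
  proof (rule arg_cong[where f = sum_mset], rule image_mset_cong)
    fix x assume "x \<in># Rs"
    then obtain i where i: "x = Seven i" "i \<le> k" using sevRs by blast
    have "(7::real) ^ k = 7 ^ (k - i) * 7 ^ i" using i(2) by (simp flip: power_add)
    then show "(of_nat \<circ> (\<lambda>x. 7 ^ (k - sidx x))) x = real P * isize x" using i Pr by simp
  qed
  then have ms: "real m = real P * s" by (simp add: s_def sum_mset_distrib_left)
  have "sum_mset (image_mset iweight Rs) = sum_mset (image_mset (\<lambda>x. 7 * isize x) Rs)"
  proof (rule arg_cong[where f = sum_mset], rule image_mset_cong)
    fix x assume "x \<in># Rs"
    then obtain i where i: "x = Seven i" "1 \<le> i" using sevRs by blast
    have "(7::real) ^ i = 7 * 7 ^ (i - 1)" using i(2) by (cases i) auto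
    then show "iweight x = 7 * isize x" using i by simp
  qed
  then have ws: "sum_mset (image_mset iweight Rs) = 7 * s" by (simp add: s_def sum_mset_distrib_left)
  define n where "n = size Rb"
  have bigRb: "\<forall>x\<in>#Rb. x \<in> {Big 1, Big 2, Big 3}"
    using tyR by (auto simp: Rb_def)
  have "image_mset iweight Rb = image_mset (\<lambda>_. 2) Rb"
    by (rule image_mset_cong) (use bigRb in auto)
  then have wb: "sum_mset (image_mset iweight Rb) = 2 * real n" by (simp add: n_def)
  have "sum_mset (image_mset (\<lambda>_. 1/3) Rb) \<le> sum_mset (image_mset isize Rb)"
    by (rule sum_mset_mono) (use bigRb in auto)
  then have sb: "real n / 3 \<le> sum_mset (image_mset isize Rb)" by (simp add: n_def)
  have tot: "s + real n / 3 < 1"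
    using lt split_sum[of isize R issev] sb unfolding R_def Rs_def Rb_def s_def by linarith
  have wtot: "bin_weight M = iweight L + 7 * s + 2 * real n"
    using sum_diff1[OF L, of iweight] split_sum[of iweight R issev] ws wb
    unfolding bin_weight_def R_def Rs_def Rb_def by linarith
  have Ppos: "real P > 0" using Pr by simp
  have Lt: "L \<in> Seven ` {1..k} \<union> {Big 1, Big 2, Big 3}" using ty L by blast
  show ?thesis
  proof (cases "issev L")
    case True
    then obtain i where i: "L = Seven i" "1 \<le> i" using Lt by auto
    have "n = 0"
    proof (rule ccontr)
      assume "n \<noteq> 0"
      then obtain x where x: "x \<in># Rb" unfolding n_def by (metis multiset_nonemptyE size_empty)
      then have "x \<in># M" unfolding Rb_def R_def by (auto dest: in_diffD)
      then have "isize x \<le> isize L" using mx by blast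
      moreover have "isize x \<ge> 1/3" using bigRb x by auto
      moreover have "isize L \<le> 1/7"
      proof -
        have "(7::real) ^ 1 \<le> 7 ^ i" using i(2) by (intro power_increasing) auto
        then show ?thesis using i by (simp add: frac_le)
      qed
      ultimately show False by linarith
    qed
    have wL: "iweight L \<le> 1" using i by simp
    have "real m < real P" using ms tot \<open>n = 0\<close> Ppos by simp
    then have "m + 1 \<le> P" by simp
    then have "real m + 1 \<le> real P" by linarith
    then have "7 * s \<le> 7 - 7 / real P" using ms Ppos by (simp add: field_simps)
    then show ?thesis using wtot wL \<open>n = 0\<close> k7 Pr by simp
  next
    case False
    then obtain j where j: "L = Big j" by (cases L) auto
    have "3 * real m + real n * real P < 3 * real P"
    proof -
      have "(3 * real P) * (s + real n / 3) < (3 * real P) * 1" using tot Ppos by (intro mult_strict_left_mono) auto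
      then show ?thesis using ms by (simp add: algebra_simps)
    qed
    then have "real (3 * m + n * P) < real (3 * P)" by simp
    then have "3 * m + n * P < 3 * P" by (simp only: of_nat_less_iff)
    then have "7 * m + 2 * n * P + 7 \<le> 7 * P" using natbound P7 by blast
    then have "real (7 * m + 2 * n * P + 7) \<le> real (7 * P)" by (simp only: of_nat_le_iff)
    then have "7 * real m + 2 * real n * real P + 7 \<le> 7 * real P" by simp
    then have "7 * s + 2 * real n \<le> 7 - 7 / real P" using ms Ppos by (simp add: field_simps)
    then show ?thesis using wtot j k7 Pr by simp
  qed
qed




lemma sev_list_set: "set (map Seven (rev [1..<N+1])) = Seven ` {1..N}"
  by auto

lemma sev_sorted: "sorted (map isize (map Seven (rev [1..<N+1])))"
proof (induction N)
  case 0 then show ?case by simp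
next
  case (Suc N)
  have e: "rev [1..<Suc N + 1] = Suc N # rev [1..<N+1]" by simp
  have "\<forall>i\<in>{1..N}. 1 / (7::real) ^ Suc N \<le> 1 / 7 ^ i"
  proof
    fix i assume "i \<in> {1..N}"
    then have "(7::real) ^ i \<le> 7 ^ Suc N" by (intro power_increasing) auto
    then show "1 / (7::real) ^ Suc N \<le> 1 / 7 ^ i" by (intro frac_le) auto
  qed
  then show ?case using Suc by (simp only: e) (auto simp: sev_list_set)
qed

lemma sev_small: "x \<in> set (map Seven (rev [1..<N+1])) \<Longrightarrow> isize x \<le> 1/7"
proof -
  assume "x \<in> set (map Seven (rev [1..<N+1]))"
  then obtain i where i: "x = Seven i" "1 \<le> i" by auto
  have "(7::real) ^ 1 \<le> 7 ^ i" using i(2) by (intro power_increasing) auto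
  then show ?thesis using i by (simp add: frac_le)
qed

lemma sorted_o1: "sorted (map isize (order1 N))"
  using sev_sorted[of N] sev_small[of _ N] unfolding order1_def
  by (auto simp: sorted_append, fastforce+)

lemma sorted_o2: "sorted (map isize (order2 N))"
  using sev_sorted[of N] sev_small[of _ N] unfolding order2_def
  by (auto simp: sorted_append, fastforce+)

lemma distinct_o1: "distinct (order1 N)"
  unfolding order1_def by (auto simp: distinct_map inj_on_def)

lemma distinct_o2: "distinct (order2 N)"
  unfolding order2_def by (auto simp: distinct_map inj_on_def)

lemma set_o1: "set (order1 N) = Seven ` {1..N} \<union> {Big 3, Big 2, Big 1}"
  unfolding order1_def by auto

lemma set_o2: "set (order2 N) = Seven ` {1..N} \<union> {Big 3, Big 2}"
  unfolding order2_def by auto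

lemma sizes_ge: "N \<ge> 1 \<Longrightarrow> x \<in> Seven ` {1..N} \<union> {Big 3, Big 2, Big 1} \<Longrightarrow> isize x \<ge> 1 / 7 ^ N"
proof -
  assume N: "N \<ge> 1" and x: "x \<in> Seven ` {1..N} \<union> {Big 3, Big 2, Big 1}"
  have "(7::real) ^ 1 \<le> 7 ^ N" using N by (intro power_increasing) auto
  then have s: "1 / (7::real) ^ N \<le> 1/7" by (simp add: frac_le)
  show ?thesis
  proof (cases "x \<in> Seven ` {1..N}")
    case True
    then obtain i where i: "x = Seven i" "i \<le> N" by auto
    then have "(7::real) ^ i \<le> 7 ^ N" by (intro power_increasing) auto
    then show ?thesis using i by (simp add: frac_le)
  next
    case False
    then show ?thesis using x s by auto
  qed
qed

lemma fin_o1: "N \<ge> 1 \<Longrightarrow> finite {M. feasible (order1 N) M}"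
proof (rule finite_feas[OF distinct_o1 sorted_o1, of "1/7^N"])
  assume N: "N \<ge> 1"
  show "0 < 1 / (7::real) ^ N" by simp
  show "\<forall>x\<in>set (order1 N). 1 / 7 ^ N \<le> isize x"
  proof
    fix x assume "x \<in> set (order1 N)"
    then have "x \<in> Seven ` {1..N} \<union> {Big 3, Big 2, Big 1}" by (auto simp: set_o1)
    then show "1 / 7 ^ N \<le> isize x" by (rule sizes_ge[OF N])
  qed
qed

lemma fin_o2: "N \<ge> 1 \<Longrightarrow> finite {M. feasible (order2 N) M}"
proof (rule finite_feas[OF distinct_o2 sorted_o2, of "1/7^N"])
  assume N: "N \<ge> 1"
  show "0 < 1 / (7::real) ^ N" by simp
  show "\<forall>x\<in>set (order2 N). 1 / 7 ^ N \<le> isize x"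
  proof
    fix x assume "x \<in> set (order2 N)"
    then have "x \<in> Seven ` {1..N} \<union> {Big 3, Big 2, Big 1}" by (auto simp: set_o2)
    then show "1 / 7 ^ N \<le> isize x" by (rule sizes_ge[OF N])
  qed
qed

lemma dw_sev:
  assumes "1 \<le> k" "k \<le> N"
  shows "dropWhile (\<lambda>s. s \<noteq> Seven k) (map Seven (rev [1..<N+1]) @ rest) = map Seven (rev [1..<k+1]) @ rest"
  using assms(2)
proof (induction N rule: dec_induct)
  case base
  have e: "rev [1..<k + 1] = k # rev [1..<k]" using assms(1) by simp
  show ?case by (simp only: e) simp
next
  case (step n)
  have e: "rev [1..<Suc n + 1] = Suc n # rev [1..<n+1]" by simp
  show ?case using step by (simp only: e) simp
qed

lemma ne_o1_sev: "1 \<le> k \<Longrightarrow> k \<le> N \<Longrightarrow> not_earlier (order1 N) (Seven k) = Seven ` {1..k} \<union> {Big 3, Big 2, Big 1}"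
  unfolding not_earlier_def order1_def by (simp only: dw_sev) auto

lemma ne_o2_sev: "1 \<le> k \<Longrightarrow> k \<le> N \<Longrightarrow> not_earlier (order2 N) (Seven k) = Seven ` {1..k} \<union> {Big 3, Big 2}"
  unfolding not_earlier_def order2_def by (simp only: dw_sev) auto

lemma dw_big: "dropWhile (\<lambda>s. s \<noteq> Big j) (map Seven xs @ rest) = dropWhile (\<lambda>s. s \<noteq> Big j) rest"
  by (rule dropWhile_append2) auto

lemma ne_big:
  "not_earlier (order1 N) (Big 1) = {Big 1}"
  "not_earlier (order1 N) (Big 2) = {Big 2, Big 1}"
  "not_earlier (order1 N) (Big 3) = {Big 3, Big 2, Big 1}"
  "not_earlier (order2 N) (Big 2) = {Big 2}"
  "not_earlier (order2 N) (Big 3) = {Big 3, Big 2}"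
  unfolding not_earlier_def order1_def order2_def by (simp_all only: dw_big) auto


definition wit :: "nat \<Rightarrow> itype multiset" where
  "wit k = replicate_mset (7^k - 1) (Seven k) + {#Big 2#}"

lemma wit_props:
  assumes "1 \<le> k"
  shows "Big 2 \<in># wit k" "\<forall>x\<in>#wit k. isize x \<le> isize (Big 2)"
    "sum_mset (image_mset isize (wit k - {#Big 2#})) < 1"
    "bin_weight (wit k) = 9 - 1 / 7 ^ (k - 1)"
    "set_mset (wit k) \<subseteq> Seven ` {1..k} \<union> {Big 2}"
proof -
  have p: "(1::nat) \<le> 7 ^ k" by simp
  have r: "real (7 ^ k - 1) = 7 ^ k - 1" using p by (simp add: of_nat_diff)
  have "(7::real) ^ 1 \<le> 7 ^ k" using assms by (intro power_increasing) auto
  then have "1 / (7::real) ^ k \<le> 1 / 2" by (simp add: frac_le)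
  then show "\<forall>x\<in>#wit k. isize x \<le> isize (Big 2)" by (auto simp: wit_def)
  show "Big 2 \<in># wit k" by (simp add: wit_def)
  have "sum_mset (image_mset isize (wit k - {#Big 2#})) = (7 ^ k - 1) / 7 ^ k"
    by (simp add: wit_def r)
  then show "sum_mset (image_mset isize (wit k - {#Big 2#})) < 1" by simp
  have k7: "(7::real) ^ k = 7 * 7 ^ (k - 1)" using assms by (cases k) auto
  have "bin_weight (wit k) = (7 ^ k - 1) / 7 ^ (k - 1) + 2"
    by (simp add: wit_def bin_weight_def r)
  also have "\<dots> = 9 - 1 / 7 ^ (k - 1)" by (simp add: k7 field_simps)
  finally show "bin_weight (wit k) = 9 - 1 / 7 ^ (k - 1)" .
  show "set_mset (wit k) \<subseteq> Seven ` {1..k} \<union> {Big 2}" using assms by (auto simp: wit_def)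
qed

lemma W_val:
  assumes "1 \<le> k" "k \<le> N"
  shows "W N k = 9 - 1 / 7 ^ (k - 1)"
  unfolding W_def
proof (rule max_weight_eq[OF fin_o1 _ _ wit_props(4)[OF assms(1)]])
  show "1 \<le> N" using assms by simp
  show "feasible (order1 N) (wit k)"
    by (rule feas_intro[OF distinct_o1 sorted_o1 _ wit_props(1-3)[OF assms(1)]])
       (use wit_props(5)[OF assms(1)] assms in \<open>auto simp: set_o1\<close>)
  show "set_mset (wit k) \<subseteq> not_earlier (order1 N) (Seven k)"
    using wit_props(5)[OF assms(1)] by (auto simp: ne_o1_sev[OF assms])
  fix M assume f: "feasible (order1 N) M" and s: "set_mset M \<subseteq> not_earlier (order1 N) (Seven k)"
  show "bin_weight M \<le> 9 - 1 / 7 ^ (k - 1)"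
  proof (cases "M = {#}")
    case True
    have "(1::real) \<le> 7 ^ (k - 1)" by simp
    then have "1 / (7::real) ^ (k - 1) \<le> 1" by simp
    moreover have "bin_weight M = 0" using True by (simp add: bin_weight_def)
    ultimately show ?thesis by linarith
  next
    case False
    then obtain L where "L \<in># M" "\<forall>x\<in>#M. isize x \<le> isize L" "sum_mset (image_mset isize (M - {#L#})) < 1"
      using feas_elim[OF distinct_o1 sorted_o1 f] by blast
    then show ?thesis using boundW[OF assms(1)] s ne_o1_sev[OF assms] by blast
  qed
qed

lemma V_val:
  assumes "1 \<le> k" "k \<le> N"
  shows "V N k = 9 - 1 / 7 ^ (k - 1)"
  unfolding V_def
proof (rule max_weight_eq[OF fin_o2 _ _ wit_props(4)[OF assms(1)]])
  show "1 \<le> N" using assms by simp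
  show "feasible (order2 N) (wit k)"
    by (rule feas_intro[OF distinct_o2 sorted_o2 _ wit_props(1-3)[OF assms(1)]])
       (use wit_props(5)[OF assms(1)] assms in \<open>auto simp: set_o2\<close>)
  show "set_mset (wit k) \<subseteq> not_earlier (order2 N) (Seven k)"
    using wit_props(5)[OF assms(1)] by (auto simp: ne_o2_sev[OF assms])
  fix M assume f: "feasible (order2 N) M" and s: "set_mset M \<subseteq> not_earlier (order2 N) (Seven k)"
  show "bin_weight M \<le> 9 - 1 / 7 ^ (k - 1)"
  proof (cases "M = {#}")
    case True
    have "(1::real) \<le> 7 ^ (k - 1)" by simp
    then have "1 / (7::real) ^ (k - 1) \<le> 1" by simp
    moreover have "bin_weight M = 0" using True by (simp add: bin_weight_def)
    ultimately show ?thesis by linarith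
  next
    case False
    then obtain L where L: "L \<in># M" "\<forall>x\<in>#M. isize x \<le> isize L" "sum_mset (image_mset isize (M - {#L#})) < 1"
      using feas_elim[OF distinct_o2 sorted_o2 f] by blast
    have "\<forall>x\<in>#M. x \<in> Seven ` {1..k} \<union> {Big 1, Big 2, Big 3}" using s ne_o2_sev[OF assms] by auto
    then show ?thesis using boundW[OF assms(1) _ L] by blast
  qed
qed

lemma big_val:
  assumes fin: "finite {M. feasible ord M}" and d: "distinct ord" and so: "sorted (map isize ord)"
    and c: "1 \<le> c" and ne: "not_earlier ord t \<subseteq> Big ` {1..c}"
    and f0: "feasible ord M0" and s0: "set_mset M0 \<subseteq> not_earlier ord t" and w0: "bin_weight M0 = 2 * real c"
  shows "max_weight ord t = 2 * real c"
proof (rule max_weight_eq[OF fin f0 s0 w0])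
  fix M assume f: "feasible ord M" and s: "set_mset M \<subseteq> not_earlier ord t"
  show "bin_weight M \<le> 2 * real c"
  proof (cases "M = {#}")
    case True
    have "(1::real) \<le> 7 ^ (k - 1)" by simp
    then have "1 / (7::real) ^ (k - 1) \<le> 1" by simp
    moreover have "bin_weight M = 0" using True by (simp add: bin_weight_def)
    ultimately show ?thesis by linarith
  next
    case False
    then obtain L where L: "L \<in># M" "sum_mset (image_mset isize (M - {#L#})) < 1"
      using feas_elim[OF d so f] by blast
    have "\<forall>x\<in>#M. x \<in> Big ` {1..c}" using s ne by auto
    then show ?thesis using boundBig[OF c _ L] by blast
  qed
qed

lemma wit_feas:
  assumes "distinct ord" "sorted (map isize ord)" "Big j \<in> set ord" "j \<ge> 1" "real (n - 1) / real j < 1" "n \<ge> 1"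
  shows "feasible ord (replicate_mset n (Big j))"
proof (rule feas_intro[OF assms(1,2), of _ "Big j"])
  show "Big j \<in># replicate_mset n (Big j)" using assms(6) by simp
  show "sum_mset (image_mset isize (replicate_mset n (Big j) - {#Big j#})) < 1"
    using assms(5,6) by (cases n) (auto simp: divide_inverse)
qed (use assms in auto)

lemma ne_big1': "not_earlier (order1 N) (Big (Suc 0)) = {Big (Suc 0)}"
  using ne_big(1) by simp

theorem mainTheorem12:
  fixes N :: nat
  assumes "N \<ge> 3"
  shows "A N 1 = 2 \<and> A N 2 = 4 \<and> B N 2 = 4 \<and> A N 3 = 6 \<and> B N 3 = 6 \<and>
         (\<forall>k. 1 \<le> k \<and> k \<le> N \<longrightarrow>
            W N k = 9 - 1 / 7 ^ (k - 1) \<and> V N k = 9 - 1 / 7 ^ (k - 1))"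
proof -
  have N1: "1 \<le> N" using assms by simp
  have bw: "bin_weight (replicate_mset n (Big j)) = 2 * real n" for n j
    by (simp add: bin_weight_def)
  have A1: "A N 1 = 2 * real 1" unfolding A_def
    by (rule big_val[OF fin_o1[OF N1] distinct_o1 sorted_o1 _ _
          wit_feas[OF distinct_o1[of N] sorted_o1[of N], where j=1 and n=1]]) (auto simp: ne_big ne_big1' set_o1 bw bin_weight_def)
  have A2: "A N 2 = 2 * real 2" unfolding A_def
    by (rule big_val[OF fin_o1[OF N1] distinct_o1 sorted_o1 _ _
          wit_feas[OF distinct_o1[of N] sorted_o1[of N], where j=2 and n=2]]) (auto simp: ne_big set_o1 bw)
  have A3: "A N 3 = 2 * real 3" unfolding A_def
    by (rule big_val[OF fin_o1[OF N1] distinct_o1 sorted_o1 _ _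
          wit_feas[OF distinct_o1[of N] sorted_o1[of N], where j=3 and n=3]]) (auto simp: ne_big set_o1 bw)
  have B2: "B N 2 = 2 * real 2" unfolding B_def
    by (rule big_val[OF fin_o2[OF N1] distinct_o2 sorted_o2 _ _
          wit_feas[OF distinct_o2[of N] sorted_o2[of N], where j=2 and n=2]]) (auto simp: ne_big set_o2 bw)
  have B3: "B N 3 = 2 * real 3" unfolding B_def
    by (rule big_val[OF fin_o2[OF N1] distinct_o2 sorted_o2 _ _
          wit_feas[OF distinct_o2[of N] sorted_o2[of N], where j=3 and n=3]]) (auto simp: ne_big set_o2 bw)
  show ?thesis using A1 A2 A3 B2 B3 W_val V_val by simp
qed


end
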